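(* Let $\Phi=\{X_i\}$ be a homogeneous Poisson point process of intensity $\lambda$ on $\mathbb{R}^2$ with receivers $y_i=X_i+r_i$, $|r_i|=r$, angles i.i.d. uniform and independent of $\Phi$, and let $b_{ij}=|X_i-y_j|^{\beta}/(Tr^{\beta})$ with $\beta>2$, $T>0$. For a bounded window $A\subset\mathbb{R}^2$, let $\{p_i^A: X_i\in A\}$ be the solution of problem $\mathbf{PF}^A$, i.e. the unique solution of: for each $X_i\in A$, $p_i^A$ solves $\frac1{p_i}=\sum_{j:X_j\in A,\,j\ne i}\frac{1}{1+b_{ij}-p_i}$ if $\sum_{j:X_j\in A,\,j\ne i}1/b_{ij}>1$, and $p_i^A=1$ otherwise. Then for any given $X_i\in\Phi$, as $A$ increases to $\mathbb{R}^2$, $p_i^A$ converges to $p_i^{\mathbb{R}^2}$, the unique solution in $p_i$ of $\frac1{p_i}=\sum_{j\ne i}\frac{1}{1+b_{ij}-p_i}$ (sum over all $j\ne i$) if $\sum_{j\ne i}1/b_{ij}>1$, and $p_i^{\mathbb{R}^2}=1$ otherwise.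
   Context: Problem $\mathbf{PF}^A$: for the finitely many transmitters $X_i\in A$, maximize $\sum_{X_i\in A}\log(p_iq_i)$ over $0\le p_i\le1$, where $q_i=e^{-\mu Tr^{\beta}W}\prod_{j\ne i}(1-p_j/(1+b_{ji}))$ is the conditional probability that $\mathrm{SINR}_i=F_i^ir^{-\beta}/(\sum_{j\ne i}|X_j-y_i|^{-\beta}F_j^ie_j+W)\ge T$ given the geometry (Rayleigh fading with mean $1/\mu$, independent Aloha access indicators with probabilities $p_j$). Its unique solution is characterized by the fixed-point equations stated in the claim. *)

theory Defs
  imports "HOL-Probability.Probability"
begin

text \<open>The plane R^2 is modelled as the type complex (Euclidean norm cmod).
A point of an independently marked point process is a pair (x, theta):
a transmitter position x and its receiver angle theta.\<close>

definition poisson_point_process ::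
  "'w measure \<Rightarrow> 'a measure \<Rightarrow> ('w \<Rightarrow> 'a set) \<Rightarrow> bool" where
  "poisson_point_process M nu Psi \<longleftrightarrow>
     prob_space M \<and>
     (\<forall>B \<in> sets nu. emeasure nu B < \<infinity> \<longrightarrow>
        (\<lambda>w. card (Psi w \<inter> B)) \<in> measurable M (count_space UNIV) \<and>
        {w \<in> space M. finite (Psi w \<inter> B)} \<in> sets M \<and>
        measure M {w \<in> space M. finite (Psi w \<inter> B)} = 1 \<and>
        (\<forall>k::nat. measure M {w \<in> space M. finite (Psi w \<inter> B) \<and> card (Psi w \<inter> B) = k}
                  = (measure nu B) ^ k / fact k * exp (- measure nu B))) \<and>
     (\<forall>(I::nat set) (Bs :: nat \<Rightarrow> 'a set).
        finite I \<and> disjoint_family_on Bs I \<and>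
        (\<forall>i\<in>I. Bs i \<in> sets nu \<and> emeasure nu (Bs i) < \<infinity>) \<longrightarrow>
        prob_space.indep_vars M (\<lambda>_. count_space UNIV) (\<lambda>i w. card (Psi w \<inter> Bs i)) I)"

text \<open>Intensity measure of the independently marked homogeneous PPP:
lambda * Lebesgue on the plane, times the uniform law of the angle on [0, 2 pi).\<close>

definition marked_intensity :: "real \<Rightarrow> (complex \<times> real) measure" where
  "marked_intensity lam =
     density (lborel :: (complex \<times> real) measure)
       (\<lambda>(x, th). ennreal (lam / (2 * pi) * indicator {0..<2 * pi} th))"

definition receiver :: "real \<Rightarrow> complex \<times> real \<Rightarrow> complex" where
  "receiver r j = fst j + complex_of_real r * cis (snd j)"

definition bcoef :: "real \<Rightarrow> real \<Rightarrow> real \<Rightarrow> complex \<times> real \<Rightarrow> complex \<times> real \<Rightarrow> real" where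
  "bcoef r beta T i j = (cmod (fst i - receiver r j)) powr beta / (T * r powr beta)"

definition pA :: "real \<Rightarrow> real \<Rightarrow> real \<Rightarrow> (complex \<times> real) set \<Rightarrow> complex set
                   \<Rightarrow> complex \<times> real \<Rightarrow> real" where
  "pA r beta T S A i =
     (let J = {j \<in> S. fst j \<in> A} - {i} in
      if (\<Sum>j\<in>J. 1 / bcoef r beta T i j) > 1
      then (THE p. 0 < p \<and> p \<le> 1 \<and> 1 / p = (\<Sum>j\<in>J. 1 / (1 + bcoef r beta T i j - p)))
      else 1)"

definition pR2 :: "real \<Rightarrow> real \<Rightarrow> real \<Rightarrow> (complex \<times> real) set
                   \<Rightarrow> complex \<times> real \<Rightarrow> real" where
  "pR2 r beta T S i =
     (let J = S - {i} in
      if (\<Sum>\<^sub>\<infinity>j\<in>J. 1 / bcoef r beta T i j) > 1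
      then (THE p. 0 < p \<and> p \<le> 1 \<and> 1 / p = (\<Sum>\<^sub>\<infinity>j\<in>J. 1 / (1 + bcoef r beta T i j - p)))
      else 1)"

end

theory Submission
  imports Defs
begin


definition phi :: "('a \<Rightarrow> real) \<Rightarrow> 'a set \<Rightarrow> real \<Rightarrow> real" where
  "phi b K p = (\<Sum>\<^sub>\<infinity>j\<in>K. 1 / (1 + b j - p))"

lemma t_summ:
  fixes b :: "'a \<Rightarrow> real"
  assumes b0: "\<And>j. j \<in> K \<Longrightarrow> 0 \<le> b j" and s0: "(\<lambda>j. 1 / (1 + b j)) summable_on K"
    and p: "0 \<le> p" "p < 1"
  shows "(\<lambda>j. 1 / (1 + b j - p)) summable_on K"
proof (rule summable_on_comparison_test[of "\<lambda>j. 1 / (1 + b j) * (1 / (1 - p))"])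
  show "(\<lambda>j. 1 / (1 + b j) * (1 / (1 - p))) summable_on K"
    by (rule summable_on_cmult_left[OF s0])
  fix j assume j: "j \<in> K"
  have bj: "0 \<le> b j" using b0[OF j] .
  have "(1 + b j) * (1 - p) \<le> 1 + b j - p" using bj p by (simp add: algebra_simps mult_nonneg_nonneg)
  moreover have "0 < (1 + b j) * (1 - p)" using bj p by simp
  ultimately show "1 / (1 + b j - p) \<le> 1 / (1 + b j) * (1 / (1 - p))"
    by (simp add: divide_simps)
  show "0 \<le> 1 / (1 + b j - p)" using bj p by simp
qed

lemma phi_mono:
  fixes b :: "'a \<Rightarrow> real"
  assumes b0: "\<And>j. j \<in> K \<Longrightarrow> 0 \<le> b j" and s0: "(\<lambda>j. 1 / (1 + b j)) summable_on K"
    and p: "0 \<le> p" "p \<le> q" "q < 1"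
  shows "phi b K p \<le> phi b K q"
  unfolding phi_def
proof (rule infsum_mono)
  show "(\<lambda>j. 1 / (1 + b j - p)) summable_on K" using t_summ[OF b0 s0] p by auto
  show "(\<lambda>j. 1 / (1 + b j - q)) summable_on K" using t_summ[OF b0 s0] p by auto
  fix j assume "j \<in> K" then have "0 \<le> b j" by (rule b0)
  then show "1 / (1 + b j - p) \<le> 1 / (1 + b j - q)" using p
    by (intro divide_left_mono) (auto simp: mult_pos_pos)
qed

lemma phi_nonneg:
  fixes b :: "'a \<Rightarrow> real"
  assumes b0: "\<And>j. j \<in> K \<Longrightarrow> 0 \<le> b j" and p: "p \<le> 1"
  shows "0 \<le> phi b K p"
  unfolding phi_def
proof (rule infsum_nonneg)
  fix x assume "x \<in> K"
  then have "0 \<le> b x" by (rule b0)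
  then show "0 \<le> 1 / (1 + b x - p)" using p by simp
qed

lemma phi_one: "phi (b :: 'a \<Rightarrow> real) K 1 = (\<Sum>\<^sub>\<infinity>j\<in>K. 1 / b j)"
  unfolding phi_def by simp

lemma phi_lip:
  fixes b :: "'a \<Rightarrow> real"
  assumes b0: "\<And>j. j \<in> K \<Longrightarrow> 0 \<le> b j" and s0: "(\<lambda>j. 1 / (1 + b j)) summable_on K"
    and d: "0 < d" "d \<le> 1"
  shows "(phi b K 0 / d^2)-lipschitz_on {0..1-d} (phi b K)"
proof -
  have main: "phi b K q - phi b K p \<le> phi b K 0 / d^2 * (q - p)"
    if pq: "0 \<le> p" "p \<le> q" "q \<le> 1 - d" for p q
  proof -
    define t where "t x j = 1 / (1 + b j - x)" for x j
    have sp: "t p summable_on K" "t q summable_on K" "t 0 summable_on K"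
      unfolding t_def using t_summ[OF b0 s0] pq d s0 by auto
    have bnd: "t q j - t p j \<le> (q - p) / d^2 * t 0 j" "0 \<le> t q j - t p j" if j: "j \<in> K" for j
    proof -
      have bj: "0 \<le> b j" using b0[OF j] .
      have nq: "1 + b j - q \<noteq> 0" and np: "1 + b j - p \<noteq> 0" using bj pq d by auto
      have e: "t q j - t p j = (q - p) / ((1 + b j - q) * (1 + b j - p))"
        unfolding t_def using nq np by (simp add: field_simps)
      have "d * b j \<le> b j" using bj d by (intro mult_left_le_one_le) auto
      then have h1: "d * (1 + b j) \<le> 1 + b j - q" using pq by (simp add: algebra_simps)
      have h2: "d \<le> 1 + b j - p" using bj pq d by simp
      have "d * (1 + b j) * d \<le> (1 + b j - q) * (1 + b j - p)"
        using h1 h2 bj d pq by (intro mult_mono) auto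
      moreover have "0 < d * (1 + b j) * d" using d bj by simp
      ultimately have "(q - p) / ((1 + b j - q) * (1 + b j - p)) \<le> (q - p) / (d * (1 + b j) * d)"
        using pq by (intro divide_left_mono) auto
      also have "\<dots> = (q - p) / d^2 * t 0 j" unfolding t_def by (simp add: power2_eq_square)
      finally show "t q j - t p j \<le> (q - p) / d^2 * t 0 j" using e by simp
      show "0 \<le> t q j - t p j" using e pq bj d by simp
    qed
    have sd: "(\<lambda>j. t q j - t p j) summable_on K"
      by (rule summable_on_comparison_test[OF summable_on_cmult_right[OF sp(3), of "(q-p)/d^2"]])
         (use bnd in auto)
    have "infsum (t q) K = infsum (\<lambda>j. t p j + (t q j - t p j)) K" by simp
    also have "\<dots> = infsum (t p) K + infsum (\<lambda>j. t q j - t p j) K"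
      by (rule infsum_add[OF sp(1) sd])
    finally have "infsum (t q) K - infsum (t p) K = infsum (\<lambda>j. t q j - t p j) K" by simp
    also have "\<dots> \<le> infsum (\<lambda>j. (q - p) / d^2 * t 0 j) K"
      by (rule infsum_mono[OF sd summable_on_cmult_right[OF sp(3)]]) (use bnd in auto)
    also have "\<dots> = (q - p) / d^2 * infsum (t 0) K" by (rule infsum_cmult_right) (use sp in auto)
    finally show ?thesis unfolding phi_def t_def by (simp add: algebra_simps)
  qed
  show ?thesis
  proof (rule lipschitz_onI)
    show "0 \<le> phi b K 0 / d^2" using phi_nonneg[of K b 0] b0 by simp
    fix x y assume "x \<in> {0..1-d}" "y \<in> {0..1-d}"
    then show "dist (phi b K x) (phi b K y) \<le> phi b K 0 / d\<^sup>2 * dist x y"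
    proof (cases "x \<le> y")
      case True
      have "phi b K x \<le> phi b K y" using phi_mono[OF b0 s0, of x y] True \<open>x \<in> _\<close> \<open>y \<in> _\<close> d by auto
      then show ?thesis using main[of x y] True \<open>x \<in> _\<close> \<open>y \<in> _\<close> unfolding dist_real_def by auto
    next
      case False
      have "phi b K y \<le> phi b K x" using phi_mono[OF b0 s0, of y x] False \<open>x \<in> _\<close> \<open>y \<in> _\<close> d by auto
      then show ?thesis using main[of y x] False \<open>x \<in> _\<close> \<open>y \<in> _\<close> unfolding dist_real_def by auto
    qed
  qed
qed

lemma root_lt1:
  fixes b :: "'a \<Rightarrow> real"
  assumes c: "(\<Sum>\<^sub>\<infinity>j\<in>K. 1 / b j) > 1" and q: "0 < q" "q \<le> 1" "1 / q = phi b K q"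
  shows "q < 1"
proof (rule ccontr)
  assume "\<not> q < 1" then have "q = 1" using q by auto
  then show False using q c phi_one[of b K] by simp
qed

lemma root_unique:
  fixes b :: "'a \<Rightarrow> real"
  assumes b0: "\<And>j. j \<in> K \<Longrightarrow> 0 \<le> b j" and s0: "(\<lambda>j. 1 / (1 + b j)) summable_on K"
    and c: "(\<Sum>\<^sub>\<infinity>j\<in>K. 1 / b j) > 1"
    and p: "0 < p" "p \<le> 1" "1 / p = phi b K p"
    and q: "0 < q" "q \<le> 1" "1 / q = phi b K q"
  shows "p = q"
proof -
  have p1: "p < 1" by (rule root_lt1[OF c p])
  have q1: "q < 1" by (rule root_lt1[OF c q])
  have *: False if "0 < x" "x < y" "y < 1" "1 / x = phi b K x" "1 / y = phi b K y" for x y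
  proof -
    have "phi b K x \<le> phi b K y" using phi_mono[OF b0 s0, of x y] that by auto
    moreover have "1 / y < 1 / x" using that(1,2) by (simp add: divide_strict_left_mono)
    ultimately show False using that(4,5) by linarith
  qed
  show ?thesis using *[of p q] *[of q p] p q p1 q1 by (cases p q rule: linorder_cases) auto
qed

lemma root_exists:
  fixes b :: "'a \<Rightarrow> real"
  assumes b0: "\<And>j. j \<in> K \<Longrightarrow> 0 \<le> b j" and s0: "(\<lambda>j. 1 / (1 + b j)) summable_on K"
    and s1: "(\<lambda>j. 1 / b j) summable_on K"
    and c: "(\<Sum>\<^sub>\<infinity>j\<in>K. 1 / b j) > 1"
  shows "\<exists>p. 0 < p \<and> p < 1 \<and> 1 / p = phi b K p"
proof -
  have "\<forall>\<^sub>F F in finite_subsets_at_top K. 1 < sum (\<lambda>j. 1 / b j) F"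
    using order_tendstoD(1)[OF infsum_tendsto[OF s1] c] .
  then obtain K0 where K0: "finite K0" "K0 \<subseteq> K" "1 < sum (\<lambda>j. 1 / b j) K0"
    unfolding eventually_finite_subsets_at_top by blast
  define K1 where "K1 = {j \<in> K0. b j \<noteq> 0}"
  have K1: "finite K1" "K1 \<subseteq> K" using K0 unfolding K1_def by auto
  have "sum (\<lambda>j. 1 / b j) K1 = sum (\<lambda>j. 1 / b j) K0"
    unfolding K1_def by (rule sum.mono_neutral_left) (use K0 in auto)
  with K0 have cK1: "1 < sum (\<lambda>j. 1 / b j) K1" by simp
  define h where "h p = p * sum (\<lambda>j. 1 / (1 + b j - p)) K1" for p
  have "isCont h 1" unfolding h_def
    by (intro continuous_intros) (auto simp: K1_def)
  moreover have "h 1 = sum (\<lambda>j. 1 / b j) K1" unfolding h_def by simp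
  ultimately have "(h \<longlongrightarrow> sum (\<lambda>j. 1 / b j) K1) (at 1)" by (simp add: isCont_def)
  from order_tendstoD(1)[OF this cK1]
  obtain d where d: "0 < d" "\<And>x. x \<noteq> 1 \<Longrightarrow> dist x 1 < d \<Longrightarrow> 1 < h x"
    unfolding eventually_at by blast
  define p1 where "p1 = max (1/2) (1 - d/2)"
  have p1: "1/2 \<le> p1" "p1 < 1" "0 < p1" using d unfolding p1_def by auto
  have "1 < h p1" using d p1 by (intro d(2)) (auto simp: dist_real_def p1_def)
  then have "1 / p1 < sum (\<lambda>j. 1 / (1 + b j - p1)) K1" using p1 unfolding h_def
    by (simp add: divide_simps mult.commute)
  also have "\<dots> = (\<Sum>\<^sub>\<infinity>j\<in>K1. 1 / (1 + b j - p1))" using K1 by simp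
  also have "\<dots> \<le> phi b K p1" unfolding phi_def
  proof (rule infsum_mono2)
    show "(\<lambda>j. 1 / (1 + b j - p1)) summable_on K" using t_summ[OF b0 s0] p1 by auto
    fix x assume "x \<in> K - K1" then have "0 \<le> b x" using b0 by auto
    then show "0 \<le> 1 / (1 + b x - p1)" using p1 by simp
  qed (use K1 in auto)
  finally have g1: "1 / p1 - phi b K p1 \<le> 0" by simp
  define p0 where "p0 = min (1/2) (1 / (phi b K (1/2) + 1))"
  have ph: "0 \<le> phi b K (1/2)" using phi_nonneg[of K b "1/2"] b0 by simp
  have p0: "0 < p0" "p0 \<le> 1/2" using ph unfolding p0_def by auto
  have "phi b K p0 \<le> phi b K (1/2)" using phi_mono[OF b0 s0, of p0 "1/2"] p0 by auto
  moreover have "phi b K (1/2) + 1 \<le> 1 / p0"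
  proof -
    have "p0 \<le> 1 / (phi b K (1/2) + 1)" unfolding p0_def by simp
    then show ?thesis using p0 ph by (simp add: divide_simps mult.commute)
  qed
  ultimately have g0: "0 \<le> 1 / p0 - phi b K p0" by simp
  have cont: "continuous_on {p0..p1} (\<lambda>x. 1 / x - phi b K x)"
  proof (intro continuous_intros)
    show "continuous_on {p0..p1} (phi b K)"
    proof (rule continuous_on_subset)
      show "continuous_on {0..1 - (1 - p1)} (phi b K)"
        by (rule lipschitz_on_continuous_on[OF phi_lip[OF b0 s0]]) (use p1 in auto)
      show "{p0..p1} \<subseteq> {0..1 - (1 - p1)}" using p0 by auto
    qed
  qed (use p0 in auto)
  from IVT2'[of "\<lambda>x. 1 / x - phi b K x", OF g1 g0 _ cont] p0 p1
  obtain x where "p0 \<le> x" "x \<le> p1" "1 / x - phi b K x = 0" by auto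
  then show ?thesis using p0 p1 by (intro exI[of _ x]) auto
qed

definition Pof :: "('a \<Rightarrow> real) \<Rightarrow> 'a set \<Rightarrow> real" where
  "Pof b K = (if (\<Sum>\<^sub>\<infinity>j\<in>K. 1 / b j) > 1
     then (THE p. 0 < p \<and> p \<le> 1 \<and> 1 / p = phi b K p) else 1)"

lemma Pof_root:
  fixes b :: "'a \<Rightarrow> real"
  assumes b0: "\<And>j. j \<in> K \<Longrightarrow> 0 \<le> b j" and s0: "(\<lambda>j. 1 / (1 + b j)) summable_on K"
    and s1: "(\<lambda>j. 1 / b j) summable_on K"
    and c: "(\<Sum>\<^sub>\<infinity>j\<in>K. 1 / b j) > 1"
  shows "0 < Pof b K \<and> Pof b K < 1 \<and> 1 / Pof b K = phi b K (Pof b K)"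
proof -
  obtain p where p: "0 < p" "p < 1" "1 / p = phi b K p" using root_exists[OF b0 s0 s1 c] by blast
  have "(THE p. 0 < p \<and> p \<le> 1 \<and> 1 / p = phi b K p) = p"
  proof (rule the_equality)
    show "0 < p \<and> p \<le> 1 \<and> 1 / p = phi b K p" using p by linarith
    fix x assume x: "0 < x \<and> x \<le> 1 \<and> 1 / x = phi b K x"
    show "x = p"
    proof (rule root_unique[OF b0 s0 c])
      show "0 < x" "x \<le> 1" "1 / x = phi b K x" using x by blast+
      show "0 < p" "p \<le> 1" "1 / p = phi b K p" using p by linarith+
    qed
  qed
  then have "Pof b K = p" using c unfolding Pof_def by (simp only: if_True)
  then show ?thesis using p by (simp only:)
qed

lemma exhaust_tendsto:
  assumes Kn: "\<And>n. finite (Kn n) \<and> Kn n \<subseteq> J"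
    and ev: "\<And>F. finite F \<Longrightarrow> F \<subseteq> J \<Longrightarrow> eventually (\<lambda>n. F \<subseteq> Kn n) sequentially"
    and g: "g summable_on J"
  shows "(\<lambda>n. sum g (Kn n)) \<longlonglongrightarrow> infsum g J"
proof -
  have "filterlim Kn (finite_subsets_at_top J) sequentially"
    unfolding filterlim_def le_filter_def eventually_filtermap
  proof (intro allI impI)
    fix P assume "eventually P (finite_subsets_at_top J)"
    then have "\<exists>X. finite X \<and> X \<subseteq> J \<and> (\<forall>Y. finite Y \<and> X \<subseteq> Y \<and> Y \<subseteq> J \<longrightarrow> P Y)"
      by (simp only: eventually_finite_subsets_at_top)
    then obtain X where X: "finite X" "X \<subseteq> J" "\<And>Y. finite Y \<Longrightarrow> X \<subseteq> Y \<Longrightarrow> Y \<subseteq> J \<Longrightarrow> P Y"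
      by auto
    show "eventually (\<lambda>n. P (Kn n)) sequentially"
      using ev[OF X(1,2)]
    proof eventually_elim
      case (elim n)
      show ?case by (rule X(3)) (use elim Kn in blast)+
    qed
  qed
  from filterlim_compose[OF infsum_tendsto[OF g] this] show ?thesis by (simp add: o_def)
qed

lemma Pof_conv:
  fixes b :: "'a \<Rightarrow> real"
  assumes b0: "\<And>j. j \<in> J \<Longrightarrow> 0 \<le> b j" and s0: "(\<lambda>j. 1 / (1 + b j)) summable_on J"
    and s1: "(\<lambda>j. 1 / b j) summable_on J"
    and Kn: "\<And>n. finite (Kn n) \<and> Kn n \<subseteq> J"
    and ev: "\<And>F. finite F \<Longrightarrow> F \<subseteq> J \<Longrightarrow> eventually (\<lambda>n. F \<subseteq> Kn n) sequentially"
  shows "(\<lambda>n. Pof b (Kn n)) \<longlonglongrightarrow> Pof b J"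
proof -
  have b0n: "\<And>j. j \<in> Kn n \<Longrightarrow> 0 \<le> b j" for n using Kn b0 by blast
  have s0n: "(\<lambda>j. 1 / (1 + b j)) summable_on Kn n" for n using Kn by simp
  have s1n: "(\<lambda>j. 1 / b j) summable_on Kn n" for n using Kn by simp
  define c where "c = (\<Sum>\<^sub>\<infinity>j\<in>J. 1 / b j)"
  have cn_le: "(\<Sum>\<^sub>\<infinity>j\<in>Kn n. 1 / b j) \<le> c" for n unfolding c_def
    by (rule infsum_mono2[OF s1n s1]) (use Kn b0 in auto)
  have cn_lim: "(\<lambda>n. (\<Sum>\<^sub>\<infinity>j\<in>Kn n. 1 / b j)) \<longlonglongrightarrow> c"
    using exhaust_tendsto[OF Kn ev s1] Kn unfolding c_def by simp
  have phin_le: "phi b (Kn n) q \<le> phi b J q" if "0 \<le> q" "q < 1" for n q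
    unfolding phi_def
  proof (rule infsum_mono2)
    fix x assume "x \<in> J - Kn n"
    then have "0 \<le> b x" using b0 by auto
    then show "0 \<le> 1 / (1 + b x - q)" using that by simp
  qed (use Kn t_summ[OF b0 s0] that in auto)
  have phin_lim: "(\<lambda>n. phi b (Kn n) q) \<longlonglongrightarrow> phi b J q" if "0 \<le> q" "q < 1" for q
    using exhaust_tendsto[OF Kn ev t_summ[OF b0 s0 that]] Kn unfolding phi_def by simp
  show ?thesis
  proof (cases "c > 1")
    case False
    have "Pof b (Kn n) = 1" for n using cn_le[of n] False unfolding Pof_def by auto
    moreover have "Pof b J = 1" using False unfolding Pof_def c_def by auto
    ultimately show ?thesis by simp
  next
    case True
    define ps where "ps = Pof b J"
    have ps: "0 < ps" "ps < 1" "1 / ps = phi b J ps"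
      using Pof_root[OF b0 s0 s1] True unfolding ps_def c_def by auto
    have evc: "eventually (\<lambda>n. (\<Sum>\<^sub>\<infinity>j\<in>Kn n. 1 / b j) > 1) sequentially"
      using order_tendstoD(1)[OF cn_lim True] .
    have evr: "eventually (\<lambda>n. 0 < Pof b (Kn n) \<and> Pof b (Kn n) < 1 \<and>
        1 / Pof b (Kn n) = phi b (Kn n) (Pof b (Kn n))) sequentially"
      using evc
    proof eventually_elim
      case (elim n)
      show ?case by (rule Pof_root[OF b0n s0n s1n elim])
    qed
    have lower: "eventually (\<lambda>n. ps \<le> Pof b (Kn n)) sequentially"
      using evr
    proof eventually_elim
      case (elim n)
      define pn where "pn = Pof b (Kn n)"
      have pn: "0 < pn" "pn < 1" "1 / pn = phi b (Kn n) pn" using elim unfolding pn_def by auto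
      show ?case unfolding pn_def[symmetric]
      proof (rule ccontr)
        assume "\<not> ps \<le> pn"
        then have lt: "pn < ps" by simp
        have "phi b (Kn n) pn \<le> phi b (Kn n) ps" by (rule phi_mono) (use b0n s0n lt pn ps in auto)
        also have "\<dots> \<le> phi b J ps" using phin_le[of ps n] ps by auto
        finally have "1 / pn \<le> 1 / ps" using pn(3) ps(3) by linarith
        moreover have "1 / ps < 1 / pn" using lt pn(1) by (simp add: divide_strict_left_mono)
        ultimately show False by linarith
      qed
    qed
    show ?thesis
    proof (rule order_tendstoI)
      fix a assume a: "a < Pof b J"
      show "eventually (\<lambda>n. a < Pof b (Kn n)) sequentially"
        using lower
      proof eventually_elim
        case (elim n)
        then show ?case using a unfolding ps_def by linarith
      qed
    next
      fix a assume a: "Pof b J < a"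
      define q where "q = min a ((ps + 1) / 2)"
      have a': "ps < a" using a unfolding ps_def .
      have q: "ps < q" "q < 1" "q \<le> a" using a' ps(1,2) unfolding q_def by (auto simp: min_def)
      have "1 / q < 1 / ps" using q(1) ps(1) by (simp add: divide_strict_left_mono)
      also have "\<dots> \<le> phi b J q" using ps(3) phi_mono[OF b0 s0, of ps q] q ps by auto
      finally have "1 / q < phi b J q" .
      from order_tendstoD(1)[OF phin_lim this] q ps
      have evq: "eventually (\<lambda>n. 1 / q < phi b (Kn n) q) sequentially" by auto
      show "eventually (\<lambda>n. Pof b (Kn n) < a) sequentially"
        using evq evr
      proof eventually_elim
        case (elim n)
        define pn where "pn = Pof b (Kn n)"
        have pn: "0 < pn" "pn < 1" "1 / pn = phi b (Kn n) pn" using elim unfolding pn_def by auto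
        have "pn < q"
        proof (rule ccontr)
          assume "\<not> pn < q"
          then have le: "q \<le> pn" by simp
          have "phi b (Kn n) q \<le> phi b (Kn n) pn" by (rule phi_mono) (use b0n s0n le pn q ps in auto)
          then have "1 / q < 1 / pn" using elim(1) pn(3) by linarith
          moreover have "1 / pn \<le> 1 / q" using le q(1) ps(1) by (simp add: divide_left_mono)
          ultimately show False by linarith
        qed
        then show ?case using q unfolding pn_def by simp
      qed
    qed
  qed
qed



lemma tri: "cmod (x::complex) \<le> cmod (y - (x + c)) + cmod y + cmod c"
proof -
  have "x = y - (y - (x + c)) - c" by simp
  then have "cmod x = cmod (y - (y - (x + c)) - c)" by simp
  also have "\<dots> \<le> cmod (y - (y - (x + c))) + cmod c" by (rule norm_triangle_ineq4)
  also have "cmod (y - (y - (x + c))) \<le> cmod y + cmod (y - (x + c))" by (rule norm_triangle_ineq4)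
  finally show ?thesis by simp
qed

lemma summ_split:
  fixes f :: "'a \<Rightarrow> real"
  assumes "finite N" "f summable_on (J - N)"
  shows "f summable_on J"
proof -
  have "f summable_on ((J \<inter> N) \<union> (J - N))"
    by (rule summable_on_Un_disjoint) (use assms in auto)
  moreover have "(J \<inter> N) \<union> (J - N) = J" by blast
  ultimately show ?thesis by simp
qed

lemma bcoef_nonneg: "0 < r \<Longrightarrow> 0 < T \<Longrightarrow> 0 \<le> bcoef r beta T i j"
  unfolding bcoef_def by simp

lemma far_bound:
  assumes r: "0 < r" and beta: "0 < beta" and T: "0 < T"
    and far: "2 * (cmod (fst i) + r) + 1 \<le> cmod (fst j)"
  shows "0 < bcoef r beta T i j"
    "1 / bcoef r beta T i j \<le> (T * r powr beta * 2 powr beta) * (1 + cmod (fst j)) powr (-beta)"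
proof -
  define x where "x = cmod (fst j)"
  define D where "D = cmod (fst i - receiver r j)"
  have "x \<le> D + cmod (fst i) + cmod (complex_of_real r * cis (snd j))"
    unfolding x_def D_def receiver_def by (rule tri)
  also have "cmod (complex_of_real r * cis (snd j)) = r" using r by (simp add: norm_mult)
  finally have xD: "x \<le> D + cmod (fst i) + r" .
  have "1 + x \<le> 2 * D" using xD far unfolding x_def by (smt (verit))
  then have D1: "(1 + x) / 2 \<le> D" by simp
  have x0: "0 \<le> x" unfolding x_def by simp
  have Dpos: "0 < D" using D1 x0 by (simp add: field_simps)
  have "((1 + x) / 2) powr beta \<le> D powr beta"
    by (rule powr_mono2) (use beta D1 x0 in auto)
  then have Dp: "(1 + x) powr beta / 2 powr beta \<le> D powr beta" by (simp add: powr_divide)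
  have pos1: "0 < (1 + x) powr beta" using x0 by simp
  have pos2: "0 < 2 powr beta" by simp
  have pos3: "0 < T * r powr beta" using T r by simp
  have b: "bcoef r beta T i j = D powr beta / (T * r powr beta)"
    unfolding bcoef_def D_def by simp
  show "0 < bcoef r beta T i j" unfolding b using Dpos pos3 by simp
  have "1 / bcoef r beta T i j = (T * r powr beta) / D powr beta" unfolding b by simp
  also have "\<dots> \<le> (T * r powr beta) / ((1 + x) powr beta / 2 powr beta)"
    by (rule divide_left_mono) (use Dp pos1 pos2 pos3 Dpos in auto)
  also have "\<dots> = (T * r powr beta * 2 powr beta) * (1 + x) powr (-beta)"
    by (simp add: powr_minus_divide)
  finally show "1 / bcoef r beta T i j \<le> (T * r powr beta * 2 powr beta) * (1 + cmod (fst j)) powr (-beta)"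
    unfolding x_def .
qed

lemma geo_conv:
  fixes S :: "(complex \<times> real) set"
  assumes r: "0 < r" and beta: "0 < beta" and T: "0 < T" and i: "i \<in> S"
    and H1: "\<And>R. finite {j \<in> S. cmod (fst j) < R}"
    and H2: "(\<lambda>j. (1 + cmod (fst j)) powr (-beta)) summable_on S"
    and A: "incseq A" "\<forall>n. bounded (A n)" "(\<Union>n. A n) = UNIV"
  shows "(\<lambda>n. pA r beta T S (A n) i) \<longlonglongrightarrow> pR2 r beta T S i"
proof -
  define b where "b = bcoef r beta T i"
  define J where "J = S - {i}"
  define Kn where "Kn n = {j \<in> S. fst j \<in> A n} - {i}" for n
  have Knfin: "finite (Kn n) \<and> Kn n \<subseteq> J" for n
  proof -
    obtain R where R: "\<forall>x\<in>A n. norm x \<le> R" using A(2) unfolding bounded_iff by blast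
    have "Kn n \<subseteq> {j \<in> S. cmod (fst j) < R + 1}" unfolding Kn_def using R by fastforce
    then have "finite (Kn n)" using H1 finite_subset by blast
    then show ?thesis unfolding Kn_def J_def by auto
  qed
  have ev: "eventually (\<lambda>n. F \<subseteq> Kn n) sequentially" if F: "finite F" "F \<subseteq> J" for F
  proof -
    have "\<forall>j\<in>F. eventually (\<lambda>n. j \<in> Kn n) sequentially"
    proof
      fix j assume j: "j \<in> F"
      have "fst j \<in> (\<Union>n. A n)" using A(3) by simp
      then obtain m where m: "fst j \<in> A m" by blast
      show "eventually (\<lambda>n. j \<in> Kn n) sequentially"
        unfolding eventually_sequentially
      proof (intro exI allI impI)
        fix n assume "m \<le> n"
        then have "A m \<subseteq> A n" using A(1) by (simp add: incseq_def)
        then show "j \<in> Kn n" using m j F unfolding Kn_def J_def by auto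
      qed
    qed
    from eventually_ball_finite[OF F(1) this] show ?thesis by (simp add: subset_eq)
  qed
  have b0: "0 \<le> b j" for j unfolding b_def using bcoef_nonneg r T by blast
  define R0 where "R0 = 2 * (cmod (fst i) + r) + 1"
  define N where "N = {j \<in> S. cmod (fst j) < R0}"
  have Nfin: "finite N" unfolding N_def by (rule H1)
  define C where "C = T * r powr beta * 2 powr beta"
  have Csum: "(\<lambda>j. C * (1 + cmod (fst j)) powr (-beta)) summable_on (J - N)"
    by (rule summable_on_cmult_right, rule summable_on_subset[OF H2]) (auto simp: J_def)
  have far: "0 < b j" "1 / b j \<le> C * (1 + cmod (fst j)) powr (-beta)" if "j \<in> J - N" for j
  proof -
    have "2 * (cmod (fst i) + r) + 1 \<le> cmod (fst j)" using that unfolding N_def J_def R0_def by auto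
    from far_bound[OF r beta T this] show "0 < b j" "1 / b j \<le> C * (1 + cmod (fst j)) powr (-beta)"
      unfolding b_def C_def by auto
  qed
  have s1: "(\<lambda>j. 1 / b j) summable_on J"
  proof (rule summ_split[OF Nfin])
    show "(\<lambda>j. 1 / b j) summable_on (J - N)"
    proof (rule summable_on_comparison_test[OF Csum])
      fix j assume j: "j \<in> J - N"
      show "1 / b j \<le> C * (1 + cmod (fst j)) powr (-beta)" using far(2)[OF j] .
      show "0 \<le> 1 / b j" using b0[of j] by simp
    qed
  qed
  have s0: "(\<lambda>j. 1 / (1 + b j)) summable_on J"
  proof (rule summ_split[OF Nfin])
    show "(\<lambda>j. 1 / (1 + b j)) summable_on (J - N)"
    proof (rule summable_on_comparison_test[OF Csum])
      fix j assume j: "j \<in> J - N"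
      have "1 / (1 + b j) \<le> 1 / b j" using far(1)[OF j] by (simp add: divide_left_mono)
      then show "1 / (1 + b j) \<le> C * (1 + cmod (fst j)) powr (-beta)" using far(2)[OF j] by linarith
      show "0 \<le> 1 / (1 + b j)" using b0[of j] by simp
    qed
  qed
  have conv: "(\<lambda>n. Pof b (Kn n)) \<longlonglongrightarrow> Pof b J"
    by (rule Pof_conv[OF _ s0 s1 Knfin ev]) (use b0 in auto)
  have eqA: "pA r beta T S (A n) i = Pof b (Kn n)" for n
    using Knfin[of n] unfolding pA_def Pof_def phi_def Let_def b_def Kn_def by simp
  have eqR: "pR2 r beta T S i = Pof b J"
    unfolding pR2_def Pof_def phi_def Let_def b_def J_def by simp
  show ?thesis unfolding eqA eqR by (rule conv)
qed



definition Eb :: "nat \<Rightarrow> (complex \<times> real) set" where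
  "Eb m = {x. cmod (fst x) < 2 ^ m}"

lemma pow_bound:
  fixes x beta :: real
  assumes beta: "0 < beta" and x: "0 \<le> x"
  obtains k where "x < 2 ^ Suc k" "(1 + x) powr (-beta) \<le> (2 powr (-beta)) ^ k"
proof -
  have ex: "\<exists>m::nat. 1 + x < 2 ^ m" using real_arch_pow[of 2 "1 + x"] by auto
  define m where "m = (LEAST m::nat. 1 + x < 2 ^ m)"
  have m: "1 + x < 2 ^ m" unfolding m_def by (rule LeastI_ex[OF ex])
  have "m \<noteq> 0" using m x by (cases m) auto
  then obtain k where k: "m = Suc k" by (cases m) auto
  have "\<not> 1 + x < 2 ^ k" using not_less_Least[of k "\<lambda>m. 1 + x < 2 ^ m"] k unfolding m_def by auto
  then have k2: "2 ^ k \<le> 1 + x" by simp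
  have "(1 + x) powr (-beta) \<le> (2 ^ k) powr (-beta)"
    by (rule powr_mono2') (use beta k2 in auto)
  also have "(2::real) ^ k = 2 powr (real k)" by (simp add: powr_realpow)
  also have "(2 powr (real k)) powr (-beta) = (2 powr (-beta)) ^ k"
    by (simp add: powr_powr powr_power mult.commute)
  finally show ?thesis using that[of k] m k by simp
qed

lemma perw:
  fixes S :: "(complex \<times> real) set" and beta :: real
  assumes beta: "0 < beta" and fin: "\<And>m. finite (S \<inter> Eb m)"
    and sm: "summable (\<lambda>m. (2 powr (-beta)) ^ m * real (card (S \<inter> Eb m)))"
  shows "\<And>R. finite {j \<in> S. cmod (fst j) < R}"
    and "(\<lambda>j. (1 + cmod (fst j)) powr (-beta)) summable_on S"
proof -
  fix R :: real
  obtain m where "R < 2 ^ m" using real_arch_pow[of 2 R] by auto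
  then have "{j \<in> S. cmod (fst j) < R} \<subseteq> S \<inter> Eb m" unfolding Eb_def by auto
  then show "finite {j \<in> S. cmod (fst j) < R}" using fin finite_subset by blast
next
  define \<rho> where "\<rho> = (2::real) powr (-beta)"
  have rho: "0 < \<rho>" "\<rho> < 1" unfolding \<rho>_def using beta by (auto intro!: powr_less_one)
  define h where "h j = (\<Sum>m. \<rho> ^ m * indicator (Eb m) j)" for j
  have hs: "summable (\<lambda>m. \<rho> ^ m * indicator (Eb m) j)" for j
    by (rule summable_comparison_test'[OF summable_geometric[of \<rho>]]) (use rho in \<open>auto simp: indicator_def\<close>)
  have gh: "(1 + cmod (fst j)) powr (-beta) \<le> (1 / \<rho>) * h j" for j
  proof -
    obtain k where k: "cmod (fst j) < 2 ^ Suc k" "(1 + cmod (fst j)) powr (-beta) \<le> \<rho> ^ k"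
      using pow_bound[OF beta, of "cmod (fst j)"] unfolding \<rho>_def by auto
    have "\<rho> ^ Suc k = (\<Sum>m\<in>{Suc k}. \<rho> ^ m * indicator (Eb m) j)"
      using k(1) unfolding Eb_def by (simp add: indicator_def)
    also have "\<dots> \<le> h j" unfolding h_def
      by (rule sum_le_suminf[OF hs]) (use rho in \<open>auto simp: indicator_def\<close>)
    finally have "\<rho> ^ Suc k \<le> h j" .
    then have "\<rho> ^ k \<le> (1 / \<rho>) * h j" using rho by (simp add: field_simps)
    then show ?thesis using k(2) by linarith
  qed
  show "(\<lambda>j. (1 + cmod (fst j)) powr (-beta)) summable_on S"
  proof (rule nonneg_bdd_above_summable_on)
    show "0 \<le> (1 + cmod (fst x)) powr (-beta)" for x by simp
    define B where "B = (1 / \<rho>) * (\<Sum>m. \<rho> ^ m * real (card (S \<inter> Eb m)))"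
    show "bdd_above (sum (\<lambda>j. (1 + cmod (fst j)) powr (-beta)) ` {F. F \<subseteq> S \<and> finite F})"
    proof (rule bdd_aboveI2)
      fix F assume F: "F \<in> {F. F \<subseteq> S \<and> finite F}"
      then have F: "F \<subseteq> S" "finite F" by auto
      have ind: "(\<Sum>x\<in>F. indicator (Eb m) x :: real) = real (card (F \<inter> Eb m))" for m
        using F(2) by (simp add: indicator_def sum.If_cases Int_def)
      have "sum (\<lambda>j. (1 + cmod (fst j)) powr (-beta)) F \<le> sum (\<lambda>j. (1 / \<rho>) * h j) F"
        by (rule sum_mono) (rule gh)
      also have "\<dots> = (1 / \<rho>) * (\<Sum>j\<in>F. \<Sum>m. \<rho> ^ m * indicator (Eb m) j)"
        by (simp add: sum_distrib_left h_def)
      also have "(\<Sum>j\<in>F. \<Sum>m. \<rho> ^ m * indicator (Eb m) j) = (\<Sum>m. \<Sum>j\<in>F. \<rho> ^ m * indicator (Eb m) j)"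
        by (rule suminf_sum[symmetric]) (rule hs)
      also have "\<dots> = (\<Sum>m. \<rho> ^ m * real (card (F \<inter> Eb m)))"
        by (simp add: sum_distrib_left[symmetric] ind)
      also have "\<dots> \<le> (\<Sum>m. \<rho> ^ m * real (card (S \<inter> Eb m)))"
      proof (rule suminf_le)
        show "summable (\<lambda>m. \<rho> ^ m * real (card (S \<inter> Eb m)))" using sm unfolding \<rho>_def .
        show "\<rho> ^ m * real (card (F \<inter> Eb m)) \<le> \<rho> ^ m * real (card (S \<inter> Eb m))" for m
          using card_mono[OF fin[of m], of "F \<inter> Eb m"] F rho by (intro mult_left_mono) auto
        show "summable (\<lambda>m. \<rho> ^ m * real (card (F \<inter> Eb m)))"
          using summable_sum[of F "\<lambda>j m. \<rho> ^ m * indicator (Eb m) j", OF hs]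
          by (simp add: sum_distrib_left[symmetric] ind)
      qed
      finally show "sum (\<lambda>j. (1 + cmod (fst j)) powr (-beta)) F \<le> B"
        unfolding B_def using rho divide_right_mono[of _ _ \<rho>] by (simp add: mult_left_mono)
    qed
  qed
qed



lemma Eb_sets: "Eb m \<in> sets (marked_intensity lam)"
proof -
  have "open (Eb m)" unfolding Eb_def
    by (rule open_Collect_less) (intro continuous_intros)+
  then have "Eb m \<in> sets borel" by (rule borel_open)
  then show ?thesis unfolding marked_intensity_def by simp
qed

lemma f_meas: "(\<lambda>(x::complex, th::real). ennreal (lam / (2 * pi) * indicator {0..<2 * pi} th)) \<in> borel_measurable lborel"
proof -
  have s: "snd \<in> borel_measurable (borel :: (complex \<times> real) measure)"
    by (intro borel_measurable_continuous_onI continuous_intros)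
  have g: "(\<lambda>t::real. ennreal (lam / (2 * pi) * indicator {0..<2 * pi} t)) \<in> borel_measurable borel"
    by measurable
  have "(\<lambda>p. ennreal (lam / (2 * pi) * indicator {0..<2 * pi} (snd p))) \<in> borel_measurable (borel :: (complex \<times> real) measure)"
    using measurable_compose[OF s g] by (simp add: o_def)
  then show ?thesis by (simp add: case_prod_beta')
qed

lemma cbox_area: "emeasure lborel (cbox (Complex (-R) (-R)) (Complex R R)) = ennreal ((2*R) * (2*R))" if "0 \<le> R"
  using that by (simp add: emeasure_lborel_cbox_eq Basis_complex_def)

lemma prod_meas: "emeasure (lborel :: (complex \<times> real) measure) (A \<times> B) = emeasure lborel A * emeasure lborel B"
  if "A \<in> sets lborel" "B \<in> sets lborel"
  by (subst lborel_prod[symmetric]) (rule lborel.emeasure_pair_measure_Times[OF that])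

lemma Eb_borel: "Eb m \<in> sets lborel"
  using Eb_sets[of m 1] unfolding marked_intensity_def by simp

lemma in_cb: "cmod z < R \<Longrightarrow> z \<in> cbox (Complex (-R) (-R)) (Complex R R)"
  using abs_Re_le_cmod[of z] abs_Im_le_cmod[of z] by (auto simp: cbox_complex_eq)

lemma Eb_meas:
  assumes lam: "0 < lam"
  shows "emeasure (marked_intensity lam) (Eb m) \<le> ennreal (4 * lam * 4 ^ m)"
proof -
  define R where "R = (2::real) ^ m"
  have R0: "0 \<le> R" unfolding R_def by simp
  define Cb where "Cb = cbox (Complex (-R) (-R)) (Complex R R)"
  define I where "I = {0::real..<2 * pi}"
  define f where "f = (\<lambda>(x::complex, th::real). ennreal (lam / (2 * pi) * indicator {0..<2 * pi} th))"
  have Cbs: "Cb \<in> sets lborel" unfolding Cb_def by simp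
  have Is: "I \<in> sets lborel" unfolding I_def by simp
  have CIs: "Cb \<times> I \<in> sets (lborel :: (complex \<times> real) measure)"
  proof -
    have "Cb \<times> I \<in> sets (lborel \<Otimes>\<^sub>M lborel :: (complex \<times> real) measure)"
      by (rule pair_measureI[OF Cbs Is])
    then show ?thesis by (simp only: lborel_prod)
  qed
  have "emeasure (marked_intensity lam) (Eb m) = (\<integral>\<^sup>+ x. f x * indicator (Eb m) x \<partial>lborel)"
    unfolding marked_intensity_def f_def by (rule emeasure_density[OF f_meas Eb_borel])
  also have "\<dots> \<le> (\<integral>\<^sup>+ x. ennreal (lam / (2 * pi)) * indicator (Cb \<times> I) x \<partial>lborel)"
  proof (rule nn_integral_mono)
    fix x :: "complex \<times> real"
    obtain z t where x: "x = (z, t)" by (cases x)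
    show "f x * indicator (Eb m) x \<le> ennreal (lam / (2 * pi)) * indicator (Cb \<times> I) x"
    proof (cases "t \<in> I \<and> x \<in> Eb m")
      case True
      then have "z \<in> Cb" unfolding Cb_def using in_cb[of z R] unfolding x Eb_def R_def by auto
      then show ?thesis using True unfolding x f_def I_def by (simp add: indicator_def)
    next
      case False
      then show ?thesis unfolding x f_def I_def by (auto simp: indicator_def)
    qed
  qed
  also have "\<dots> = ennreal (lam / (2 * pi)) * emeasure lborel (Cb \<times> I)"
    by (rule nn_integral_cmult_indicator[OF CIs])
  also have "emeasure lborel (Cb \<times> I) = emeasure lborel Cb * emeasure lborel I"
    by (rule prod_meas[OF Cbs Is])
  also have "emeasure lborel Cb = ennreal ((2*R) * (2*R))" unfolding Cb_def by (rule cbox_area[OF R0])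
  also have "emeasure lborel I = ennreal (2 * pi)" unfolding I_def by simp
  also have "ennreal (lam / (2 * pi)) * (ennreal ((2*R) * (2*R)) * ennreal (2 * pi)) = ennreal (4 * lam * 4 ^ m)"
  proof -
    have "ennreal (lam / (2 * pi)) * (ennreal ((2*R) * (2*R)) * ennreal (2 * pi))
        = ennreal (lam / (2 * pi) * ((2*R) * (2*R) * (2 * pi)))"
    proof -
      have a: "ennreal ((2*R) * (2*R)) * ennreal (2 * pi) = ennreal ((2*R) * (2*R) * (2 * pi))"
        by (rule ennreal_mult[symmetric]) (use R0 in auto)
      have b: "ennreal (lam / (2 * pi)) * ennreal ((2*R) * (2*R) * (2 * pi)) = ennreal (lam / (2 * pi) * ((2*R) * (2*R) * (2 * pi)))"
        by (rule ennreal_mult[symmetric]) (use R0 lam in auto)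
      show ?thesis by (simp only: a b)
    qed
    also have "lam / (2 * pi) * ((2*R) * (2*R) * (2 * pi)) = 4 * lam * 4 ^ m"
      unfolding R_def by (simp add: field_simps power_mult_distrib[symmetric])
    finally show ?thesis .
  qed
  finally show ?thesis by simp
qed

lemma poisson_mean_sums: "(\<lambda>k. real k * (mu ^ k / fact k * exp (- mu))) sums (mu::real)"
proof -
  define f where "f k = real k * (mu ^ k / fact k * exp (- mu))" for k
  have "(\<lambda>n. mu ^ n / fact n) sums exp mu" using exp_converges[of mu] by (simp add: divide_inverse mult.commute)
  then have "(\<lambda>n. mu * (mu ^ n / fact n) * exp (- mu)) sums (mu * exp mu * exp (- mu))"
    by (intro sums_mult sums_mult2)
  moreover have "mu * exp mu * exp (- mu) = mu" by (simp add: exp_minus field_simps)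
  moreover have "(\<lambda>n. mu * (mu ^ n / fact n) * exp (- mu)) = (\<lambda>n. f (Suc n))"
  proof
    fix n
    have "fact (Suc n) = (real (Suc n)) * fact n" by (simp only: fact_Suc of_nat_mult)
    moreover have "fact n \<noteq> (0::real)" by simp
    ultimately show "mu * (mu ^ n / fact n) * exp (- mu) = f (Suc n)"
      unfolding f_def by (simp add: field_simps del: of_nat_Suc)
  qed
  ultimately have "(\<lambda>n. f (Suc n)) sums mu" by simp
  then have "f sums (mu + f 0)" by (simp only: sums_Suc_iff)
  then show ?thesis unfolding f_def by simp
qed

lemma exp_count:
  assumes ppp: "poisson_point_process M nu Psi" and B: "B \<in> sets nu" "emeasure nu B < \<infinity>"
  shows "(\<lambda>w. card (Psi w \<inter> B)) \<in> measurable M (count_space UNIV)"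
    and "(\<integral>\<^sup>+w. ennreal (real (card (Psi w \<inter> B))) \<partial>M) = ennreal (measure nu B)"
proof -
  have P: "prob_space M" using ppp unfolding poisson_point_process_def by blast
  have C: "(\<lambda>w. card (Psi w \<inter> B)) \<in> measurable M (count_space UNIV) \<and>
        {w \<in> space M. finite (Psi w \<inter> B)} \<in> sets M \<and>
        measure M {w \<in> space M. finite (Psi w \<inter> B)} = 1 \<and>
        (\<forall>k::nat. measure M {w \<in> space M. finite (Psi w \<inter> B) \<and> card (Psi w \<inter> B) = k}
                  = (measure nu B) ^ k / fact k * exp (- measure nu B))"
    using ppp B unfolding poisson_point_process_def by blast
  define N where "N w = card (Psi w \<inter> B)" for w
  define mu where "mu = measure nu B"
  have mu0: "0 \<le> mu" unfolding mu_def by simp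
  have meas: "N \<in> measurable M (count_space UNIV)" using C unfolding N_def by blast
  then show "(\<lambda>w. card (Psi w \<inter> B)) \<in> measurable M (count_space UNIV)" unfolding N_def .
  define Ak where "Ak k = {w \<in> space M. N w = k}" for k
  have Aks: "Ak k \<in> sets M" for k
  proof -
    have "N -` {k} \<inter> space M \<in> sets M" by (rule measurable_sets[OF meas]) simp
    moreover have "N -` {k} \<inter> space M = Ak k" unfolding Ak_def by auto
    ultimately show ?thesis by simp
  qed
  have trm: "ennreal (real k) * emeasure M (Ak k) = ennreal (real k * (mu ^ k / fact k * exp (- mu)))" for k
  proof (cases "k = 0")
    case True then show ?thesis by simp
  next
    case False
    have "Ak k = {w \<in> space M. finite (Psi w \<inter> B) \<and> card (Psi w \<inter> B) = k}"
      unfolding Ak_def N_def using False by (auto intro: card_ge_0_finite)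
    then have "measure M (Ak k) = mu ^ k / fact k * exp (- mu)" using C unfolding mu_def by simp
    moreover have "emeasure M (Ak k) = ennreal (measure M (Ak k))"
      using finite_measure.emeasure_eq_measure[OF prob_space.finite_measure[OF P]] by blast
    ultimately have "emeasure M (Ak k) = ennreal (mu ^ k / fact k * exp (- mu))" by simp
    moreover have "0 \<le> mu" unfolding mu_def by simp
    ultimately have e: "emeasure M (Ak k) = ennreal (mu ^ k / fact k * exp (- mu))" "0 \<le> mu ^ k / fact k * exp (- mu)"
      by auto
    show ?thesis unfolding e(1) by (rule ennreal_mult[symmetric]) (use e(2) in auto)
  qed
  have "(\<integral>\<^sup>+w. ennreal (real (N w)) \<partial>M) = (\<integral>\<^sup>+w. (\<Sum>k. ennreal (real k) * indicator (Ak k) w) \<partial>M)"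
  proof (rule nn_integral_cong)
    fix w assume w: "w \<in> space M"
    have "(\<Sum>k. ennreal (real k) * indicator (Ak k) w) = (\<Sum>k\<in>{N w}. ennreal (real k) * indicator (Ak k) w)"
      by (rule suminf_finite) (auto simp: Ak_def indicator_def)
    also have "\<dots> = ennreal (real (N w))" using w by (simp add: Ak_def indicator_def)
    finally show "ennreal (real (N w)) = (\<Sum>k. ennreal (real k) * indicator (Ak k) w)" by simp
  qed
  also have "\<dots> = (\<Sum>k. \<integral>\<^sup>+w. ennreal (real k) * indicator (Ak k) w \<partial>M)"
    by (rule nn_integral_suminf) (use Aks in measurable)
  also have "\<dots> = (\<Sum>k. ennreal (real k * (mu ^ k / fact k * exp (- mu))))"
    by (simp add: nn_integral_cmult_indicator[OF Aks] trm)
  also have "\<dots> = ennreal (\<Sum>k. real k * (mu ^ k / fact k * exp (- mu)))"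
    by (rule suminf_ennreal2) (use poisson_mean_sums[of mu] mu0 in \<open>auto simp: sums_iff\<close>)
  also have "(\<Sum>k. real k * (mu ^ k / fact k * exp (- mu))) = mu"
    using poisson_mean_sums[of mu] by (simp add: sums_iff)
  finally show "(\<integral>\<^sup>+w. ennreal (real (card (Psi w \<inter> B))) \<partial>M) = ennreal (measure nu B)"
    unfolding N_def mu_def .
qed



theorem mainTheorem3:
  fixes M :: "'w measure" and Psi :: "'w \<Rightarrow> (complex \<times> real) set"
    and lam r beta T :: real
  assumes "0 < lam" and "0 < r" and "2 < beta" and "0 < T"
    and "poisson_point_process M (marked_intensity lam) Psi"
  shows "AE w in M. \<forall>i \<in> Psi w. \<forall>A :: nat \<Rightarrow> complex set.
           (incseq A \<and> (\<forall>n. bounded (A n)) \<and> (\<Union>n. A n) = UNIV) \<longrightarrow>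
           (\<lambda>n. pA r beta T (Psi w) (A n) i) \<longlonglongrightarrow> pR2 r beta T (Psi w) i"
proof -
  note lam = assms(1) and r = assms(2) and beta2 = assms(3) and T = assms(4) and ppp = assms(5)
  have beta: "0 < beta" using beta2 by simp
  define nu where "nu = marked_intensity lam"
  have P: "prob_space M" using ppp unfolding poisson_point_process_def by blast
  have Es: "Eb m \<in> sets nu" for m unfolding nu_def by (rule Eb_sets)
  have Ele: "emeasure nu (Eb m) \<le> ennreal (4 * lam * 4 ^ m)" for m unfolding nu_def by (rule Eb_meas[OF lam])
  have Efin: "emeasure nu (Eb m) < \<infinity>" for m using Ele[of m] by (simp add: le_less_trans)
  have Nmeas: "(\<lambda>w. card (Psi w \<inter> Eb m)) \<in> measurable M (count_space UNIV)" for m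
    by (rule exp_count(1)[OF ppp[folded nu_def] Es Efin])
  have Nint: "(\<integral>\<^sup>+w. ennreal (real (card (Psi w \<inter> Eb m))) \<partial>M) = ennreal (measure nu (Eb m))" for m
    by (rule exp_count(2)[OF ppp[folded nu_def] Es Efin])
  have mle: "ennreal (measure nu (Eb m)) \<le> ennreal (4 * lam * 4 ^ m)" for m
    using Ele[of m] emeasure_eq_ennreal_measure[of nu "Eb m"] Efin[of m] by simp
  have AE1: "AE w in M. \<forall>m. finite (Psi w \<inter> Eb m)"
  proof (subst AE_all_countable, intro allI)
    fix m
    have C: "{w \<in> space M. finite (Psi w \<inter> Eb m)} \<in> sets M \<and>
        measure M {w \<in> space M. finite (Psi w \<inter> Eb m)} = 1"
      using ppp Es[of m] Efin[of m] unfolding poisson_point_process_def nu_def by blast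
    then have "AE w in M. w \<in> {w \<in> space M. finite (Psi w \<inter> Eb m)}"
      using prob_space.AE_prob_1[OF P] by blast
    then show "AE w in M. finite (Psi w \<inter> Eb m)" by simp
  qed
  define \<rho> where "\<rho> = (2::real) powr (-beta)"
  have rho0: "0 < \<rho>" unfolding \<rho>_def by simp
  have rho4: "4 * \<rho> < 1"
  proof -
    have "4 * \<rho> = 2 powr (2 - beta)" unfolding \<rho>_def by (simp add: powr_diff powr_minus_divide)
    also have "\<dots> < 1" using beta2 by (intro powr_less_one) auto
    finally show ?thesis .
  qed
  define G where "G w = (\<Sum>m. ennreal (\<rho> ^ m * real (card (Psi w \<inter> Eb m))))" for w
  have fmeas: "(\<lambda>w. ennreal (\<rho> ^ m * real (card (Psi w \<inter> Eb m)))) \<in> borel_measurable M" for m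
  proof -
    have h: "(\<lambda>k::nat. ennreal (\<rho> ^ m * real k)) \<in> measurable (count_space UNIV) borel" by simp
    show ?thesis using measurable_compose[OF Nmeas h] by (simp add: o_def)
  qed
  have Gmeas: "G \<in> borel_measurable M" unfolding G_def
    by (rule borel_measurable_suminf_order) (rule fmeas)
  have "integral\<^sup>N M G = (\<Sum>m. \<integral>\<^sup>+w. ennreal (\<rho> ^ m * real (card (Psi w \<inter> Eb m))) \<partial>M)"
    unfolding G_def by (rule nn_integral_suminf) (rule fmeas)
  also have "\<dots> = (\<Sum>m. ennreal (\<rho> ^ m) * ennreal (measure nu (Eb m)))"
  proof -
    have "(\<integral>\<^sup>+w. ennreal (\<rho> ^ m * real (card (Psi w \<inter> Eb m))) \<partial>M) = ennreal (\<rho> ^ m) * ennreal (measure nu (Eb m))" for m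
    proof -
      have "(\<integral>\<^sup>+w. ennreal (\<rho> ^ m * real (card (Psi w \<inter> Eb m))) \<partial>M)
          = (\<integral>\<^sup>+w. ennreal (\<rho> ^ m) * ennreal (real (card (Psi w \<inter> Eb m))) \<partial>M)"
        using rho0 by (simp add: ennreal_mult)
      also have "\<dots> = ennreal (\<rho> ^ m) * (\<integral>\<^sup>+w. ennreal (real (card (Psi w \<inter> Eb m))) \<partial>M)"
      proof (rule nn_integral_cmult)
        have h: "(\<lambda>k::nat. ennreal (real k)) \<in> measurable (count_space UNIV) borel" by simp
        show "(\<lambda>w. ennreal (real (card (Psi w \<inter> Eb m)))) \<in> borel_measurable M"
          using measurable_compose[OF Nmeas h] by (simp add: o_def)
      qed
      finally show ?thesis by (simp add: Nint)
    qed
    then show ?thesis by simp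
  qed
  also have "\<dots> \<le> (\<Sum>m. ennreal ((4 * \<rho>) ^ m * (4 * lam)))"
  proof (rule suminf_le)
    fix m
    have "ennreal (\<rho> ^ m) * ennreal (measure nu (Eb m)) \<le> ennreal (\<rho> ^ m) * ennreal (4 * lam * 4 ^ m)"
      by (rule mult_left_mono[OF mle]) simp
    also have "\<dots> = ennreal ((4 * \<rho>) ^ m * (4 * lam))"
      using rho0 lam by (simp add: ennreal_mult[symmetric] power_mult_distrib mult_ac)
    finally show "ennreal (\<rho> ^ m) * ennreal (measure nu (Eb m)) \<le> ennreal ((4 * \<rho>) ^ m * (4 * lam))" .
  qed auto
  also have "\<dots> = ennreal (\<Sum>m. (4 * \<rho>) ^ m * (4 * lam))"
    by (rule suminf_ennreal2) (use rho0 lam rho4 summable_mult2[OF summable_geometric[of "4 * \<rho>"]] in auto)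
  also have "\<dots> < \<infinity>" by simp
  finally have "integral\<^sup>N M G \<noteq> \<infinity>" by simp
  from nn_integral_noteq_infinite[OF Gmeas this]
  have AE2: "AE w in M. summable (\<lambda>m. \<rho> ^ m * real (card (Psi w \<inter> Eb m)))"
  proof (rule AE_mp, intro AE_I2 impI)
    fix w assume "G w \<noteq> \<infinity>"
    then show "summable (\<lambda>m. \<rho> ^ m * real (card (Psi w \<inter> Eb m)))"
      unfolding G_def by (intro summable_suminf_not_top) (use rho0 in auto)
  qed
  show ?thesis
    using AE1 AE2
  proof (eventually_elim)
    case (elim w)
    have H1: "\<And>R. finite {j \<in> Psi w. cmod (fst j) < R}"
      by (rule perw(1)[OF beta]) (use elim in \<open>auto simp: \<rho>_def\<close>)
    have H2: "(\<lambda>j. (1 + cmod (fst j)) powr (-beta)) summable_on Psi w"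
      by (rule perw(2)[OF beta]) (use elim in \<open>auto simp: \<rho>_def\<close>)
    show ?case
    proof (intro ballI allI impI)
      fix i A assume i: "i \<in> Psi w" and A: "incseq A \<and> (\<forall>n. bounded (A n)) \<and> (\<Union>n. A n) = (UNIV :: complex set)"
      show "(\<lambda>n. pA r beta T (Psi w) (A n) i) \<longlonglongrightarrow> pR2 r beta T (Psi w) i"
        by (rule geo_conv[OF r beta T i H1 H2]) (use A in auto)
    qed
  qed
qed


end
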